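(* Let $X\subset\mathbb C^s$ be finite and let $A\subset\mathbb N_0^s$ be a finite set such that $\Pi_A$ is a degree reducing interpolation space for $X$. Then there exists an inner product $(\cdot,\cdot)$ on $\Pi$ such that the set of polynomials that are reduced with respect to $(\cdot,\cdot)$ and the ideal $I_X$ is exactly $\Pi_A$ (i.e. $\Pi_A=r(\Pi)$, the range of the associated reduction/normal form map).
   Context: $\Pi=\mathbb C[x_1,\dots,x_s]$, $\deg$ is total degree with $\deg 0<0$; $\Pi_j^0$ is the space of homogeneous polynomials of degree exactly $j$ (together with $0$). For $A\subset\mathbb N_0^s$, $\Pi_A$ is the span of $x^\alpha$, $\alpha\in A$. $I_X=\{p\in\Pi:p(x)=0\ \forall x\in X\}$. A subspace $\mathcal P\subseteq\Pi$ is a degree reducing interpolation space for $X$ if for every $q\in\Pi$ there is exactly one $p\in\mathcal P$ with $p|_X=q|_X$, and this $p$ satisfies $\deg p\le\deg q$. For $p\neq0$ write $p=\sum_{j=0}^{\deg p}p_j$ with $p_j\in\Pi_j^0$ its homogeneous components, and let $\Lambda(p)=p_{\deg p}$ be its leading form. Given an inner product $(\cdot,\cdot)$ on $\Pi$, a polynomial $p$ is called reduced (with respect to $(\cdot,\cdot)$ and $I_X$) if for every $j$ the component $p_j$ is orthogonal to every leading form $\Lambda(q)$ with $q\in I_X\setminus\{0\}$, $\deg q=j$. *)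

theory Defs
  imports Complex_Main "HOL-Library.Poly_Mapping"
begin

text \<open>Multivariate polynomials in the variables indexed by the finite type 'n
  (i.e. s = CARD('n)): maps from exponent vectors ('n \<Rightarrow> nat) to complex
  coefficients with finite support.\<close>

type_synonym 'n mpoly = "('n \<Rightarrow> nat) \<Rightarrow>\<^sub>0 complex"

definition tdeg :: "('n::finite \<Rightarrow> nat) \<Rightarrow> nat" where
  "tdeg \<alpha> = (\<Sum>i\<in>UNIV. \<alpha> i)"

definition pdeg :: "'n::finite mpoly \<Rightarrow> int" where
  "pdeg p = (if p = 0 then -1 else int (Max (tdeg ` Poly_Mapping.keys p)))"

definition peval :: "'n::finite mpoly \<Rightarrow> ('n \<Rightarrow> complex) \<Rightarrow> complex" where
  "peval p x = (\<Sum>\<alpha>\<in>Poly_Mapping.keys p. Poly_Mapping.lookup p \<alpha> * (\<Prod>i\<in>UNIV. x i ^ \<alpha> i))"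

definition smult_mp :: "complex \<Rightarrow> 'n mpoly \<Rightarrow> 'n mpoly" where
  "smult_mp c p = Poly_Mapping.map (\<lambda>a. c * a) p"

definition hcomp :: "nat \<Rightarrow> 'n::finite mpoly \<Rightarrow> 'n mpoly" where
  "hcomp j p = Abs_poly_mapping (\<lambda>\<alpha>. if tdeg \<alpha> = j then Poly_Mapping.lookup p \<alpha> else 0)"

definition lform :: "'n::finite mpoly \<Rightarrow> 'n mpoly" where
  "lform p = hcomp (nat (pdeg p)) p"

definition vanishing_ideal :: "('n::finite \<Rightarrow> complex) set \<Rightarrow> 'n mpoly set" where
  "vanishing_ideal X = {p. \<forall>x\<in>X. peval p x = 0}"

definition Pi_A :: "('n \<Rightarrow> nat) set \<Rightarrow> 'n mpoly set" where
  "Pi_A A = {p. Poly_Mapping.keys p \<subseteq> A}"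

definition deg_reducing_interp_space ::
  "'n::finite mpoly set \<Rightarrow> ('n \<Rightarrow> complex) set \<Rightarrow> bool" where
  "deg_reducing_interp_space P X \<longleftrightarrow>
     (\<forall>q. \<exists>!p. p \<in> P \<and> (\<forall>x\<in>X. peval p x = peval q x)) \<and>
     (\<forall>q p. p \<in> P \<and> (\<forall>x\<in>X. peval p x = peval q x) \<longrightarrow> pdeg p \<le> pdeg q)"

definition inner_product :: "('n mpoly \<Rightarrow> 'n mpoly \<Rightarrow> complex) \<Rightarrow> bool" where
  "inner_product ip \<longleftrightarrow>
     (\<forall>p q r. ip (p + q) r = ip p r + ip q r) \<and>
     (\<forall>c p r. ip (smult_mp c p) r = c * ip p r) \<and>
     (\<forall>p q. ip p q = cnj (ip q p)) \<and>
     (\<forall>p. p \<noteq> 0 \<longrightarrow> Re (ip p p) > 0)"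

definition reduced ::
  "('n::finite mpoly \<Rightarrow> 'n mpoly \<Rightarrow> complex) \<Rightarrow> 'n mpoly set \<Rightarrow> 'n mpoly \<Rightarrow> bool" where
  "reduced ip I p \<longleftrightarrow>
     (\<forall>j::nat. \<forall>q\<in>I. q \<noteq> 0 \<and> pdeg q = int j \<longrightarrow> ip (hcomp j p) (lform q) = 0)"

end

theory Submission imports Defs begin

abbreviation pk where "pk \<equiv> Poly_Mapping.keys"
abbreviation lk where "lk \<equiv> Poly_Mapping.lookup"

lemma lookup_smult: "lk (smult_mp c p) a = c * lk p a"
  unfolding smult_mp_def by (simp add: Poly_Mapping.map.rep_eq when_def)

lemma lookup_hcomp: "lk (hcomp j p) a = (if tdeg a = j then lk p a else 0)"
  unfolding hcomp_def
proof (subst Abs_poly_mapping_inverse)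
  show "(\<lambda>a. if tdeg a = j then lk p a else 0) \<in> {f. finite {x. f x \<noteq> 0}}"
    by (auto intro: finite_subset[OF _ finite_keys[of p]] simp: in_keys_iff)
qed simp

definition mon :: "('n::finite \<Rightarrow> nat) \<Rightarrow> ('n \<Rightarrow> complex) \<Rightarrow> complex" where
  "mon a x = (\<Prod>i\<in>UNIV. x i ^ a i)"

lemma peval_sup: "finite S \<Longrightarrow> pk p \<subseteq> S \<Longrightarrow>
   peval p x = (\<Sum>a\<in>S. lk p a * mon a x)"
  unfolding peval_def mon_def
  by (rule sum.mono_neutral_left) (auto simp: in_keys_iff)

lemma peval_add: "peval (p + q) x = peval p x + peval q x"
proof -
  let ?S = "pk p \<union> pk q"
  have "pk (p+q) \<subseteq> ?S" by (rule keys_add)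
  thus ?thesis
    by (simp add: peval_sup[of ?S] lookup_add distrib_right sum.distrib)
qed

lemma keys_smult: "pk (smult_mp c p) \<subseteq> pk p"
  by (auto simp: in_keys_iff lookup_smult)

lemma peval_smult: "peval (smult_mp c p) x = c * peval p x"
proof -
  have "peval (smult_mp c p) x = (\<Sum>a\<in>pk p. lk (smult_mp c p) a * mon a x)"
    by (rule peval_sup[OF finite_keys keys_smult])
  moreover have "peval p x = (\<Sum>a\<in>pk p. lk p a * mon a x)"
    by (rule peval_sup) auto
  ultimately show ?thesis by (simp add: lookup_smult sum_distrib_left mult.assoc)
qed

lemma peval_minus: "peval (p - q) x = peval p x - peval q x"
  using peval_add[of "p - q" q x] by simp

lemma peval_zero: "peval 0 x = 0" by (simp add: peval_def)

lemma lookup_sub: "lk (p - q) a = lk p a - lk q a" by (rule lookup_minus)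

lemma hcomp_add: "hcomp j (p + q) = hcomp j p + hcomp j q"
  by (rule poly_mapping_eqI) (simp add: lookup_hcomp lookup_add)
lemma hcomp_sub: "hcomp j (p - q) = hcomp j p - hcomp j q"
  by (rule poly_mapping_eqI) (simp add: lookup_hcomp lookup_minus)
lemma hcomp_smult: "hcomp j (smult_mp c p) = smult_mp c (hcomp j p)"
  by (rule poly_mapping_eqI) (simp add: lookup_hcomp lookup_smult)
lemma hcomp_zero: "hcomp j 0 = 0"
  by (rule poly_mapping_eqI) (simp add: lookup_hcomp)
lemma hcomp_hom: "(\<forall>a\<in>pk h. tdeg a = j) \<Longrightarrow> hcomp j h = h"
  by (rule poly_mapping_eqI) (auto simp add: lookup_hcomp in_keys_iff)
lemma keys_hcomp: "pk (hcomp j p) \<subseteq> pk p"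
  by (auto simp: in_keys_iff lookup_hcomp split: if_splits)
lemma keys_hcomp_deg: "a \<in> pk (hcomp j p) \<Longrightarrow> tdeg a = j"
  by (auto simp: in_keys_iff lookup_hcomp split: if_splits)
lemma smult_sub: "smult_mp c (p - q) = smult_mp c p - smult_mp c q"
  by (rule poly_mapping_eqI) (simp add: lookup_smult lookup_minus algebra_simps)
lemma smult_add: "smult_mp c (p + q) = smult_mp c p + smult_mp c q"
  by (rule poly_mapping_eqI) (simp add: lookup_smult lookup_add algebra_simps)
lemma smult_zero: "smult_mp c 0 = 0"
  by (rule poly_mapping_eqI) (simp add: lookup_smult)
lemma smult_sum: "smult_mp c (sum f J) = (\<Sum>j\<in>J. smult_mp c (f j))"
  by (rule poly_mapping_eqI) (simp add: lookup_smult lookup_sum sum_distrib_left)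

lemma pdeg_ge: "a \<in> pk p \<Longrightarrow> int (tdeg a) \<le> pdeg p"
  unfolding pdeg_def by auto

lemma pdeg_lt: "(\<forall>a\<in>pk p. tdeg a < k) \<Longrightarrow> pdeg p < int k"
  unfolding pdeg_def by (auto simp: Max_less_iff)

lemma pdeg_bound: "(\<forall>a\<in>pk p. tdeg a \<le> k) \<Longrightarrow> pdeg p \<le> int k"
  unfolding pdeg_def by auto

lemma pdeg_eq: "(\<forall>a\<in>pk p. tdeg a \<le> k) \<Longrightarrow> a \<in> pk p \<Longrightarrow> tdeg a = k \<Longrightarrow> pdeg p = int k"
  using pdeg_bound[of p k] pdeg_ge[of a p] by simp

lemma PiA_add: "p \<in> Pi_A A \<Longrightarrow> q \<in> Pi_A A \<Longrightarrow> p + q \<in> Pi_A A"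
  unfolding Pi_A_def using keys_add[of p q] by auto
lemma PiA_smult: "p \<in> Pi_A A \<Longrightarrow> smult_mp c p \<in> Pi_A A"
  unfolding Pi_A_def using keys_smult[of c p] by auto
lemma PiA_zero: "0 \<in> Pi_A A"
  unfolding Pi_A_def by auto
lemma PiA_hcomp: "p \<in> Pi_A A \<Longrightarrow> hcomp j p \<in> Pi_A A"
  unfolding Pi_A_def using keys_hcomp[of j p] by auto

definition Lp :: "('n \<Rightarrow> nat) set \<Rightarrow> ('n::finite \<Rightarrow> complex) set \<Rightarrow> 'n mpoly \<Rightarrow> 'n mpoly" where
  "Lp A X q = (THE p. p \<in> Pi_A A \<and> (\<forall>x\<in>X. peval p x = peval q x))"

definition Tp :: "('n \<Rightarrow> nat) set \<Rightarrow> ('n::finite \<Rightarrow> complex) set \<Rightarrow> 'n mpoly \<Rightarrow> 'n mpoly" where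
  "Tp A X p = (\<Sum>j\<in>tdeg ` pk p. hcomp j (Lp A X (hcomp j p)))"

definition sip :: "'n mpoly \<Rightarrow> 'n mpoly \<Rightarrow> complex" where
  "sip p q = (\<Sum>a\<in>pk p. lk p a * cnj (lk q a))"

definition ipd :: "('n \<Rightarrow> nat) set \<Rightarrow> ('n::finite \<Rightarrow> complex) set \<Rightarrow> 'n mpoly \<Rightarrow> 'n mpoly \<Rightarrow> complex" where
  "ipd A X p q = sip (Tp A X p) (Tp A X q) + sip (p - Tp A X p) (q - Tp A X q)"

lemma sip_sup: "finite S \<Longrightarrow> pk p \<subseteq> S \<Longrightarrow> sip p q = (\<Sum>a\<in>S. lk p a * cnj (lk q a))"
  unfolding sip_def by (rule sum.mono_neutral_left) (auto simp: in_keys_iff)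

lemma sip_add: "sip (p + q) r = sip p r + sip q r"
proof -
  let ?S = "pk p \<union> pk q"
  have "pk (p+q) \<subseteq> ?S" by (rule keys_add)
  thus ?thesis
    by (simp add: sip_sup[of ?S] lookup_add distrib_right sum.distrib)
qed

lemma sip_smult: "sip (smult_mp c p) r = c * sip p r"
proof -
  have "sip (smult_mp c p) r = (\<Sum>a\<in>pk p. lk (smult_mp c p) a * cnj (lk r a))"
    by (rule sip_sup[OF finite_keys keys_smult])
  thus ?thesis by (simp add: sip_def lookup_smult sum_distrib_left mult.assoc)
qed

lemma sip_cnj: "sip p q = cnj (sip q p)"
proof -
  let ?S = "pk p \<union> pk q"
  have "sip p q = (\<Sum>a\<in>?S. lk p a * cnj (lk q a))" by (rule sip_sup) auto
  moreover have "sip q p = (\<Sum>a\<in>?S. lk q a * cnj (lk p a))" by (rule sip_sup) auto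
  ultimately show ?thesis by (simp add: mult.commute)
qed

lemma sip_zero_right: "sip p 0 = 0" by (simp add: sip_def)
lemma sip_zero_left: "sip 0 p = 0" by (simp add: sip_def)

lemma sip_self_Re: "Re (sip p p) = (\<Sum>a\<in>pk p. (cmod (lk p a))^2)"
  unfolding sip_def by (simp add: Re_sum complex_mult_cnj cmod_power2)  

lemma sip_self_nonneg: "Re (sip p p) \<ge> 0"
  unfolding sip_self_Re by (rule sum_nonneg) auto

lemma sip_self_pos: "p \<noteq> 0 \<Longrightarrow> Re (sip p p) > 0"
  unfolding sip_self_Re
  by (rule sum_pos) (auto simp: in_keys_iff)


lemma sip_two_pos: "a \<noteq> 0 \<or> b \<noteq> 0 \<Longrightarrow> 0 < Re (sip a a + sip b b)"
  using sip_self_pos[of a] sip_self_pos[of b] sip_self_nonneg[of a] sip_self_nonneg[of b]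
  by (auto simp del: sip_self_Re)

context
  fixes A :: "('n::finite \<Rightarrow> nat) set" and X :: "('n \<Rightarrow> complex) set"
  assumes D: "deg_reducing_interp_space (Pi_A A) X"
begin

lemma Lp_prop: "Lp A X q \<in> Pi_A A \<and> (\<forall>x\<in>X. peval (Lp A X q) x = peval q x)"
  unfolding Lp_def by (rule theI') (use D in \<open>auto simp: deg_reducing_interp_space_def\<close>)

lemma Lp_unique: "p \<in> Pi_A A \<Longrightarrow> (\<forall>x\<in>X. peval p x = peval q x) \<Longrightarrow> Lp A X q = p"
  unfolding Lp_def by (rule the1_equality) (use D in \<open>auto simp: deg_reducing_interp_space_def\<close>)

lemma Lp_cong: "(\<forall>x\<in>X. peval q x = peval q' x) \<Longrightarrow> Lp A X q = Lp A X q'"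
  using Lp_prop[of q'] by (intro Lp_unique) auto

lemma Lp_deg: "pdeg (Lp A X q) \<le> pdeg q"
  using D Lp_prop[of q] unfolding deg_reducing_interp_space_def by blast

lemma Lp_add: "Lp A X (p + q) = Lp A X p + Lp A X q"
  using Lp_prop[of p] Lp_prop[of q] by (intro Lp_unique) (auto simp: PiA_add peval_add)

lemma Lp_smult: "Lp A X (smult_mp c p) = smult_mp c (Lp A X p)"
  using Lp_prop[of p] by (intro Lp_unique) (auto simp: PiA_smult peval_smult)

lemma Lp_zero: "Lp A X 0 = 0"
  by (intro Lp_unique) (auto simp: PiA_zero)

lemma Lp_id: "p \<in> Pi_A A \<Longrightarrow> Lp A X p = p"
  by (intro Lp_unique) auto

lemma hcomp_nokey: "j \<notin> tdeg ` pk p \<Longrightarrow> hcomp j p = 0"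
  by (rule poly_mapping_eqI) (auto simp: lookup_hcomp in_keys_iff)

lemma Tp_sup: "finite J \<Longrightarrow> tdeg ` pk p \<subseteq> J \<Longrightarrow> Tp A X p = (\<Sum>j\<in>J. hcomp j (Lp A X (hcomp j p)))"
  unfolding Tp_def by (rule sum.mono_neutral_left) (auto simp: hcomp_nokey Lp_zero hcomp_zero)

lemma Tp_add: "Tp A X (p + q) = Tp A X p + Tp A X q"
proof -
  let ?J = "tdeg ` pk p \<union> tdeg ` pk q"
  have "tdeg ` pk (p+q) \<subseteq> ?J" using keys_add[of p q] by auto
  thus ?thesis
    by (simp add: Tp_sup[of ?J] hcomp_add Lp_add sum.distrib)
qed

lemma Tp_smult: "Tp A X (smult_mp c p) = smult_mp c (Tp A X p)"
proof -
  have "Tp A X (smult_mp c p) = (\<Sum>j\<in>tdeg ` pk p. hcomp j (Lp A X (hcomp j (smult_mp c p))))"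
    by (rule Tp_sup) (use keys_smult[of c p] in auto)
  thus ?thesis by (simp add: Tp_def smult_sum hcomp_smult Lp_smult)
qed

lemma Tp_zero: "Tp A X 0 = 0" by (simp add: Tp_def)

lemma Tp_hom: "(\<forall>a\<in>pk h. tdeg a = j) \<Longrightarrow> Tp A X h = hcomp j (Lp A X h)"
  by (subst Tp_sup[of "{j}"]) (auto simp: hcomp_hom)

lemma ipd_inner: "inner_product (ipd A X)"
  unfolding inner_product_def
proof (intro conjI allI impI)
  fix p q r
  have "(p + q) - Tp A X (p + q) = (p - Tp A X p) + (q - Tp A X q)"
    by (simp add: Tp_add algebra_simps)
  thus "ipd A X (p + q) r = ipd A X p r + ipd A X q r"
    unfolding ipd_def by (simp only: Tp_add sip_add) simp
next
  fix c p r
  have "smult_mp c p - Tp A X (smult_mp c p) = smult_mp c (p - Tp A X p)"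
    by (simp add: Tp_smult smult_sub)
  thus "ipd A X (smult_mp c p) r = c * ipd A X p r"
    unfolding ipd_def by (simp add: Tp_smult sip_smult distrib_left)
next
  fix p q
  show "ipd A X p q = cnj (ipd A X q p)"
    unfolding ipd_def by (simp add: sip_cnj[of "Tp A X p"] sip_cnj[of "p - Tp A X p"])
next
  fix p :: "'n mpoly" assume "p \<noteq> 0"
  hence "Tp A X p \<noteq> 0 \<or> p - Tp A X p \<noteq> 0" by auto
  thus "Re (ipd A X p p) > 0"
    unfolding ipd_def
    by (rule sip_two_pos)
qed

lemma K1:
  assumes hom: "\<forall>a\<in>pk h. tdeg a = j"
  defines "q \<equiv> h - Lp A X h"
  shows "q \<in> vanishing_ideal X" and "h - Tp A X h = hcomp j q"
    and "hcomp j q \<noteq> 0 \<Longrightarrow> q \<noteq> 0 \<and> pdeg q = int j \<and> lform q = hcomp j q"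
proof -
  show "q \<in> vanishing_ideal X"
    using Lp_prop[of h] unfolding q_def vanishing_ideal_def by (simp add: peval_minus)
  show "h - Tp A X h = hcomp j q"
    unfolding q_def using hom by (simp add: Tp_hom hcomp_sub hcomp_hom)
  assume nz: "hcomp j q \<noteq> 0"
  then obtain a where a: "lk (hcomp j q) a \<noteq> 0"
    by (metis poly_mapping_eqI lookup_zero)
  hence aq: "a \<in> pk q" and aj: "tdeg a = j"
    by (auto simp: lookup_hcomp in_keys_iff split: if_splits)
  have hd: "pdeg h \<le> int j" using hom by (intro pdeg_bound) auto
  have "\<forall>b\<in>pk q. tdeg b \<le> j"
  proof
    fix b assume "b \<in> pk q"
    hence "b \<in> pk h \<or> b \<in> pk (Lp A X h)"
      unfolding q_def using keys_diff[of h "Lp A X h"] by auto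
    thus "tdeg b \<le> j"
    proof
      assume "b \<in> pk (Lp A X h)"
      thus ?thesis using pdeg_ge[of b "Lp A X h"] Lp_deg[of h] hd by linarith
    qed (use hom in auto)
  qed
  hence "pdeg q = int j" using pdeg_eq aq aj by blast
  moreover have "q \<noteq> 0" using aq by auto
  ultimately show "q \<noteq> 0 \<and> pdeg q = int j \<and> lform q = hcomp j q"
    by (simp add: lform_def)
qed

lemma K2:
  assumes qI: "q \<in> vanishing_ideal X" and qd: "pdeg q = int j"
  shows "Tp A X (lform q) = 0"
proof -
  let ?h = "hcomp j q"
  have lf: "lform q = ?h" using qd by (simp add: lform_def)
  have hom: "\<forall>a\<in>pk ?h. tdeg a = j" using keys_hcomp_deg by blast
  have "Lp A X ?h = Lp A X (?h - q)"
    using qI by (intro Lp_cong) (auto simp: vanishing_ideal_def peval_minus)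
  moreover have "pdeg (?h - q) < int j"
  proof (rule pdeg_lt, intro ballI)
    fix a assume "a \<in> pk (?h - q)"
    hence "lk (?h - q) a \<noteq> 0" by (simp add: in_keys_iff)
    hence "tdeg a \<noteq> j" and "a \<in> pk q"
      by (auto simp: lookup_minus lookup_hcomp in_keys_iff split: if_splits)
    moreover have "int (tdeg a) \<le> int j" using pdeg_ge[OF \<open>a \<in> pk q\<close>] qd by simp
    ultimately show "tdeg a < j" by simp
  qed
  ultimately have "pdeg (Lp A X ?h) < int j" using Lp_deg[of "?h - q"] by simp
  hence "\<forall>a\<in>pk (Lp A X ?h). tdeg a < j" using pdeg_ge by fastforce
  hence "hcomp j (Lp A X ?h) = 0"
    by (intro poly_mapping_eqI) (auto simp: lookup_hcomp in_keys_iff)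
  thus ?thesis using lf Tp_hom[OF hom] by simp
qed

lemma main_eq: "{p. reduced (ipd A X) (vanishing_ideal X) p} = Pi_A A"
proof (intro set_eqI iffI; simp)
  fix p assume pA: "p \<in> Pi_A A"
  show "reduced (ipd A X) (vanishing_ideal X) p"
    unfolding reduced_def
  proof (intro allI ballI impI)
    fix j q assume q: "q \<in> vanishing_ideal X" "q \<noteq> 0 \<and> pdeg q = int j"
    let ?h = "hcomp j p"
    have hom: "\<forall>a\<in>pk ?h. tdeg a = j" using keys_hcomp_deg by blast
    have "Tp A X ?h = ?h"
      using Tp_hom[OF hom] Lp_id[OF PiA_hcomp[OF pA]] hcomp_hom[OF hom] by simp
    thus "ipd A X ?h (lform q) = 0"
      unfolding ipd_def using K2[of q j] q by (simp add: sip_zero_right sip_zero_left)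
  qed
next
  fix p assume red: "reduced (ipd A X) (vanishing_ideal X) p"
  have "pk p \<subseteq> A"
  proof
    fix a assume ap: "a \<in> pk p"
    define j where "j = tdeg a"
    let ?h = "hcomp j p"
    let ?q = "?h - Lp A X ?h"
    have hom: "\<forall>a\<in>pk ?h. tdeg a = j" using keys_hcomp_deg by blast
    have z: "?h - Tp A X ?h = 0"
    proof (rule ccontr)
      assume nz: "?h - Tp A X ?h \<noteq> 0"
      have e: "?h - Tp A X ?h = hcomp j ?q" by (rule K1(2)[OF hom])
      have qI: "?q \<in> vanishing_ideal X" by (rule K1(1)[OF hom])
      from K1(3)[OF hom] nz e have qp: "?q \<noteq> 0" "pdeg ?q = int j" "lform ?q = ?h - Tp A X ?h"
        by auto
      have "ipd A X ?h (lform ?q) = 0" using red qI qp unfolding reduced_def by blast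
      moreover have "Tp A X (lform ?q) = 0" by (rule K2[OF qI qp(2)])
      ultimately have "sip (?h - Tp A X ?h) (?h - Tp A X ?h) = 0"
        unfolding ipd_def using qp(3) by (simp add: sip_zero_right)
      thus False using sip_self_pos[OF nz] by simp
    qed
    hence "?h = hcomp j (Lp A X ?h)" using Tp_hom[OF hom] by simp
    moreover have "a \<in> pk ?h" using ap by (simp add: in_keys_iff lookup_hcomp j_def)
    ultimately have "a \<in> pk (Lp A X ?h)" using keys_hcomp by (metis subsetD)
    thus "a \<in> A" using Lp_prop[of ?h] unfolding Pi_A_def by auto
  qed
  thus "p \<in> Pi_A A" by (simp add: Pi_A_def)
qed

end

theorem lemma37:
  fixes X :: "('n::finite \<Rightarrow> complex) set" and A :: "('n \<Rightarrow> nat) set"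
  assumes "finite X" and "finite A"
    and "deg_reducing_interp_space (Pi_A A) X"
  shows "\<exists>ip. inner_product ip \<and> {p. reduced ip (vanishing_ideal X) p} = Pi_A A"
  using ipd_inner[OF assms(3)] main_eq[OF assms(3)] by blast

end
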